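(* Let $E$ and $F$ be locally convex spaces over $K$ and let $A\subseteq E$ be a c-precompact set. Then: (1) for every continuous linear map $f:E\to F$, the set $f(A)$ is c-precompact in $F$; (2) the closure $\overline{A}$ of $A$ in $E$ is c-precompact.
   Context: $K$ is a field complete with respect to a non-trivial non-archimedean absolute value $|\cdot|$, with $B_K=\{x\in K:|x|\le 1\}$. A locally convex space over $K$ is a topological $K$-vector space whose topology is defined by a family of non-archimedean seminorms. A subset $A$ is absolutely convex if it is a $B_K$-submodule; a set is convex if it has the form $x+A$ with $A$ absolutely convex. For an absolutely convex set $A$, a convex filter on $A$ is a filter on $A$ having a base consisting of convex sets; a maximal convex filter on $A$ is a convex filter on $A$ not properly contained in any other convex filter on $A$. A filter $\mathcal F$ on $A$ is Cauchy if for every zero neighbourhood $U$ of $E$ there is $X\in\mathcal F$ with $X-X\subseteq U$. An absolutely convex set $A$ is c-precompact if every maximal convex filter on $A$ is a Cauchy filter. *)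

theory Defs
  imports "HOL-Analysis.Analysis"
begin

definition nonarch_abs :: "('k::field \<Rightarrow> real) \<Rightarrow> bool" where
  "nonarch_abs v \<longleftrightarrow>
     (\<forall>x. v x \<ge> 0) \<and> (\<forall>x. v x = 0 \<longleftrightarrow> x = 0) \<and>
     (\<forall>x y. v (x * y) = v x * v y) \<and>
     (\<forall>x y. v (x + y) \<le> max (v x) (v y))"

definition nontrivial_abs :: "('k::field \<Rightarrow> real) \<Rightarrow> bool" where
  "nontrivial_abs v \<longleftrightarrow> (\<exists>x. x \<noteq> 0 \<and> v x \<noteq> 1)"

definition complete_abs :: "('k::field \<Rightarrow> real) \<Rightarrow> bool" where
  "complete_abs v \<longleftrightarrow>
     (\<forall>s::nat \<Rightarrow> 'k. (\<forall>e>0. \<exists>N. \<forall>m\<ge>N. \<forall>n\<ge>N. v (s m - s n) < e) \<longrightarrow>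
        (\<exists>l. \<forall>e>0. \<exists>N. \<forall>n\<ge>N. v (s n - l) < e))"

definition complete_nonarch_field :: "('k::field \<Rightarrow> real) \<Rightarrow> bool" where
  "complete_nonarch_field v \<longleftrightarrow> nonarch_abs v \<and> nontrivial_abs v \<and> complete_abs v"

definition nonarch_seminorm ::
  "('k::field \<Rightarrow> real) \<Rightarrow> ('k \<Rightarrow> 'e::ab_group_add \<Rightarrow> 'e) \<Rightarrow> ('e \<Rightarrow> real) \<Rightarrow> bool" where
  "nonarch_seminorm v smul p \<longleftrightarrow>
     (\<forall>x. p x \<ge> 0) \<and> (\<forall>c x. p (smul c x) = v c * p x) \<and>
     (\<forall>x y. p (x + y) \<le> max (p x) (p y))"

text \<open>A locally convex space over K: a K-vector space (scalar multiplication smul)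
  together with a family P of non-archimedean seminorms defining its topology.\<close>
definition lcs ::
  "('k::field \<Rightarrow> real) \<Rightarrow> ('k \<Rightarrow> 'e::ab_group_add \<Rightarrow> 'e) \<Rightarrow> ('e \<Rightarrow> real) set \<Rightarrow> bool" where
  "lcs v smul P \<longleftrightarrow> Vector_Spaces.vector_space smul \<and> (\<forall>p\<in>P. nonarch_seminorm v smul p)"

definition seminorm_open :: "('e::ab_group_add \<Rightarrow> real) set \<Rightarrow> 'e set \<Rightarrow> bool" where
  "seminorm_open P U \<longleftrightarrow>
     (\<forall>x\<in>U. \<exists>S e. finite S \<and> S \<subseteq> P \<and> e > 0 \<and> {y. \<forall>p\<in>S. p (y - x) < e} \<subseteq> U)"

definition seminorm_topology :: "('e::ab_group_add \<Rightarrow> real) set \<Rightarrow> 'e topology" where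
  "seminorm_topology P = topology (seminorm_open P)"

lemma seminorm_open_Int: "seminorm_open P S \<Longrightarrow> seminorm_open P T \<Longrightarrow> seminorm_open P (S \<inter> T)"
  unfolding seminorm_open_def
proof
  fix x assume S: "\<forall>x\<in>S. \<exists>S' e. finite S' \<and> S' \<subseteq> P \<and> e > 0 \<and> {y. \<forall>p\<in>S'. p (y - x) < e} \<subseteq> S"
    and T: "\<forall>x\<in>T. \<exists>S' e. finite S' \<and> S' \<subseteq> P \<and> e > 0 \<and> {y. \<forall>p\<in>S'. p (y - x) < e} \<subseteq> T"
    and x: "x \<in> S \<inter> T"
  have xS: "x \<in> S" "x \<in> T" using x by auto
  obtain S1 e1 where 1: "finite S1 \<and> S1 \<subseteq> P \<and> e1 > 0 \<and> {y. \<forall>p\<in>S1. p (y - x) < e1} \<subseteq> S"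
    using bspec[OF S xS(1)] by iprover
  obtain S2 e2 where 2: "finite S2 \<and> S2 \<subseteq> P \<and> e2 > 0 \<and> {y. \<forall>p\<in>S2. p (y - x) < e2} \<subseteq> T"
    using bspec[OF T xS(2)] by iprover
  have "{y. \<forall>p\<in>S1 \<union> S2. p (y - x) < min e1 e2} \<subseteq> S \<inter> T"
  proof
    fix y assume "y \<in> {y. \<forall>p\<in>S1 \<union> S2. p (y - x) < min e1 e2}"
    then have a: "y \<in> {y. \<forall>p\<in>S1. p (y - x) < e1}" and b: "y \<in> {y. \<forall>p\<in>S2. p (y - x) < e2}"
      by auto
    show "y \<in> S \<inter> T" using subsetD[OF conjunct2[OF conjunct2[OF conjunct2[OF 1]]] a] subsetD[OF conjunct2[OF conjunct2[OF conjunct2[OF 2]]] b] by (rule IntI)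
  qed
  moreover have "finite (S1 \<union> S2)" "S1 \<union> S2 \<subseteq> P" "min e1 e2 > 0" using 1 2 by auto
  ultimately show "\<exists>S' e. finite S' \<and> S' \<subseteq> P \<and> e > 0 \<and> {y. \<forall>p\<in>S'. p (y - x) < e} \<subseteq> S \<inter> T"
    by iprover
qed
lemma seminorm_open_Union: "\<forall>U\<in>K. seminorm_open P U \<Longrightarrow> seminorm_open P (\<Union>K)"
  unfolding seminorm_open_def
proof
  fix x assume K: "\<forall>U\<in>K. \<forall>x\<in>U. \<exists>S e. finite S \<and> S \<subseteq> P \<and> e > 0 \<and> {y. \<forall>p\<in>S. p (y - x) < e} \<subseteq> U"
    and "x \<in> \<Union>K"
  then obtain U where U: "U \<in> K" "x \<in> U" by blast
  then obtain S e where "finite S \<and> S \<subseteq> P \<and> e > 0 \<and> {y. \<forall>p\<in>S. p (y - x) < e} \<subseteq> U"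
    using bspec[OF bspec[OF K U(1)] U(2)] by iprover
  moreover have "U \<subseteq> \<Union>K" using U by blast
  ultimately show "\<exists>S e. finite S \<and> S \<subseteq> P \<and> e > 0 \<and> {y. \<forall>p\<in>S. p (y - x) < e} \<subseteq> \<Union>K"
    by (meson subset_trans)
qed
lemma istopology_seminorm_open: "istopology (seminorm_open P)"
  unfolding istopology_def using seminorm_open_Int seminorm_open_Union by (intro conjI allI impI; simp add: seminorm_open_Int seminorm_open_Union)

definition zero_nbhd :: "('e::ab_group_add \<Rightarrow> real) set \<Rightarrow> 'e set \<Rightarrow> bool" where
  "zero_nbhd P U \<longleftrightarrow> (\<exists>W. openin (seminorm_topology P) W \<and> 0 \<in> W \<and> W \<subseteq> U)"

definition abs_convex ::
  "('k::field \<Rightarrow> real) \<Rightarrow> ('k \<Rightarrow> 'e::ab_group_add \<Rightarrow> 'e) \<Rightarrow> 'e set \<Rightarrow> bool" where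
  "abs_convex v smul A \<longleftrightarrow>
     0 \<in> A \<and> (\<forall>x\<in>A. \<forall>y\<in>A. x + y \<in> A) \<and> (\<forall>c x. v c \<le> 1 \<longrightarrow> x \<in> A \<longrightarrow> smul c x \<in> A)"

definition nconvex ::
  "('k::field \<Rightarrow> real) \<Rightarrow> ('k \<Rightarrow> 'e::ab_group_add \<Rightarrow> 'e) \<Rightarrow> 'e set \<Rightarrow> bool" where
  "nconvex v smul C \<longleftrightarrow> (\<exists>x B. abs_convex v smul B \<and> C = (\<lambda>b. x + b) ` B)"

text \<open>A (proper) filter on A is represented by an Isabelle filter F with A in F, F non-bottom.\<close>
definition convex_filter_on ::
  "('k::field \<Rightarrow> real) \<Rightarrow> ('k \<Rightarrow> 'e::ab_group_add \<Rightarrow> 'e) \<Rightarrow> 'e set \<Rightarrow> 'e filter \<Rightarrow> bool" where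
  "convex_filter_on v smul A F \<longleftrightarrow>
     F \<noteq> bot \<and> eventually (\<lambda>x. x \<in> A) F \<and>
     (\<forall>X. eventually (\<lambda>x. x \<in> X) F \<longrightarrow>
        (\<exists>C. nconvex v smul C \<and> C \<subseteq> A \<and> eventually (\<lambda>x. x \<in> C) F \<and> C \<subseteq> X))"

text \<open>Maximal: not properly contained in another convex filter (G finer than F means G \<le> F).\<close>
definition max_convex_filter_on ::
  "('k::field \<Rightarrow> real) \<Rightarrow> ('k \<Rightarrow> 'e::ab_group_add \<Rightarrow> 'e) \<Rightarrow> 'e set \<Rightarrow> 'e filter \<Rightarrow> bool" where
  "max_convex_filter_on v smul A F \<longleftrightarrow>
     convex_filter_on v smul A F \<and>
     (\<forall>G. convex_filter_on v smul A G \<and> G \<le> F \<longrightarrow> G = F)"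

definition cauchy_filter_sn :: "('e::ab_group_add \<Rightarrow> real) set \<Rightarrow> 'e filter \<Rightarrow> bool" where
  "cauchy_filter_sn P F \<longleftrightarrow>
     (\<forall>U. zero_nbhd P U \<longrightarrow>
        (\<exists>X. eventually (\<lambda>x. x \<in> X) F \<and> {x - y | x y. x \<in> X \<and> y \<in> X} \<subseteq> U))"

definition c_precompact ::
  "('k::field \<Rightarrow> real) \<Rightarrow> ('k \<Rightarrow> 'e::ab_group_add \<Rightarrow> 'e) \<Rightarrow> ('e \<Rightarrow> real) set \<Rightarrow> 'e set \<Rightarrow> bool" where
  "c_precompact v smul P A \<longleftrightarrow>
     abs_convex v smul A \<and>
     (\<forall>F. max_convex_filter_on v smul A F \<longrightarrow> cauchy_filter_sn P F)"

end

theory Submission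
  imports Defs
begin


lemma v_one: assumes "nonarch_abs v" shows "v 1 = 1"
proof -
  have "v (1 * 1) = v 1 * v 1" using assms unfolding nonarch_abs_def by blast
  then have "v 1 = v 1 * v 1" by simp
  moreover have "v 1 \<noteq> 0" using assms unfolding nonarch_abs_def by simp
  ultimately show ?thesis by simp
qed

lemma v_m1: assumes "nonarch_abs v" shows "v (-1) = 1"
proof -
  have "v ((-1) * (-1)) = v (-1) * v (-1)" using assms unfolding nonarch_abs_def by blast
  then have a: "v (-1) * v (-1) = 1" using v_one[OF assms] by simp
  have b: "v (-1) \<ge> 0" using assms unfolding nonarch_abs_def by simp
  show ?thesis
  proof (rule ccontr)
    assume "v (-1) \<noteq> 1"
    then consider "v (-1) < 1" | "v (-1) > 1" by linarith
    then show False
    proof cases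
      case 1 then have "v (-1) * v (-1) \<le> v (-1)" using b by (simp add: mult_left_le_one_le)
      then show False using a 1 by linarith
    next
      case 2 then have "v (-1) * v (-1) > v (-1)" by simp
      then show False using a 2 by linarith
    qed
  qed
qed

locale LC =
  fixes v :: "'k::field \<Rightarrow> real" and smul :: "'k \<Rightarrow> 'e::ab_group_add \<Rightarrow> 'e" and P :: "('e \<Rightarrow> real) set"
  assumes va: "nonarch_abs v" and vs: "Vector_Spaces.vector_space smul"
    and sn: "\<And>p. p \<in> P \<Longrightarrow> nonarch_seminorm v smul p"
begin

lemma vnn: "v c \<ge> 0" using va unfolding nonarch_abs_def by simp

lemma modl: "module smul" using vs by (simp add: module_iff_vector_space)
lemma smul_add: "smul c (x + y) = smul c x + smul c y"
  by (rule module.scale_right_distrib[OF modl])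
lemma smul_diff: "smul c (x - y) = smul c x - smul c y"
  by (rule module.scale_right_diff_distrib[OF modl])
lemma smul_m1: "smul (-1) x = - x"
  using module.scale_minus_left[OF modl, of 1 x] module.scale_one[OF modl, of x] by simp
lemma smul_0: "smul 0 x = 0"
  by (rule module.scale_zero_left[OF modl])

lemma p_nn: "p \<in> P \<Longrightarrow> p x \<ge> 0" using sn unfolding nonarch_seminorm_def by blast
lemma p_max: "p \<in> P \<Longrightarrow> p (x + y) \<le> max (p x) (p y)" using sn unfolding nonarch_seminorm_def by blast
lemma p_smul: "p \<in> P \<Longrightarrow> p (smul c x) = v c * p x" using sn unfolding nonarch_seminorm_def by blast
lemma p_zero: "p \<in> P \<Longrightarrow> p 0 = 0"
proof -
  assume "p \<in> P"
  have "v 0 = 0" using va unfolding nonarch_abs_def by simp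
  then show "p 0 = 0" using p_smul[OF \<open>p \<in> P\<close>, of 0 0] smul_0 by simp
qed
lemma p_neg: "p \<in> P \<Longrightarrow> p (- x) = p x"
  using p_smul[of p "-1" x] smul_m1 v_m1[OF va] by simp
lemma p_lt_add: "p \<in> P \<Longrightarrow> p x < e \<Longrightarrow> p y < e \<Longrightarrow> p (x + y) < e"
  using p_max[of p x y] by linarith
lemma p_lt_diff: "p \<in> P \<Longrightarrow> p x < e \<Longrightarrow> p y < e \<Longrightarrow> p (x - y) < e"
  using p_lt_add[of p x e "-y"] p_neg[of p y] by simp
lemma p_smul_le: "p \<in> P \<Longrightarrow> v c \<le> 1 \<Longrightarrow> p (smul c x) \<le> p x"
  using p_smul[of p c x] p_nn[of p x] vnn[of c] by (simp add: mult_left_le_one_le)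
lemma p_sym: "p \<in> P \<Longrightarrow> p (x - y) = p (y - x)"
  using p_neg[of p "y - x"] by simp

lemma ac_add: "abs_convex v smul B \<Longrightarrow> x \<in> B \<Longrightarrow> y \<in> B \<Longrightarrow> x + y \<in> B"
  unfolding abs_convex_def by blast
lemma ac_0: "abs_convex v smul B \<Longrightarrow> 0 \<in> B"
  unfolding abs_convex_def by blast
lemma ac_smul: "abs_convex v smul B \<Longrightarrow> v c \<le> 1 \<Longrightarrow> x \<in> B \<Longrightarrow> smul c x \<in> B"
  unfolding abs_convex_def by blast

lemma ac_neg: "abs_convex v smul B \<Longrightarrow> x \<in> B \<Longrightarrow> - x \<in> B"
  using ac_smul[of B "-1" x] smul_m1 v_m1[OF va] by simp
lemma ac_diff: "abs_convex v smul B \<Longrightarrow> x \<in> B \<Longrightarrow> y \<in> B \<Longrightarrow> x - y \<in> B"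
  using ac_add[of B x "-y"] ac_neg[of B y] by simp
lemma ac_Int: "abs_convex v smul B1 \<Longrightarrow> abs_convex v smul B2 \<Longrightarrow> abs_convex v smul (B1 \<inter> B2)"
  unfolding abs_convex_def by blast

lemma ac_sum: assumes "abs_convex v smul B1" "abs_convex v smul B2"
  shows "abs_convex v smul {b1 + b2 | b1 b2. b1 \<in> B1 \<and> b2 \<in> B2}"
  unfolding abs_convex_def
proof (intro conjI allI ballI impI)
  show "0 \<in> {b1 + b2 | b1 b2. b1 \<in> B1 \<and> b2 \<in> B2}" using ac_0[OF assms(1)] ac_0[OF assms(2)] by force
next
  fix x y assume "x \<in> {b1 + b2 | b1 b2. b1 \<in> B1 \<and> b2 \<in> B2}" "y \<in> {b1 + b2 | b1 b2. b1 \<in> B1 \<and> b2 \<in> B2}"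
  then obtain a1 a2 c1 c2 where "x = a1 + a2" "y = c1 + c2" "a1 \<in> B1" "a2 \<in> B2" "c1 \<in> B1" "c2 \<in> B2" by blast
  then show "x + y \<in> {b1 + b2 | b1 b2. b1 \<in> B1 \<and> b2 \<in> B2}"
  proof -
    have "x + y = (a1 + c1) + (a2 + c2)" using \<open>x = a1 + a2\<close> \<open>y = c1 + c2\<close> by (simp add: algebra_simps)
    then show ?thesis using ac_add[OF assms(1), of a1 c1] ac_add[OF assms(2), of a2 c2] \<open>a1 \<in> B1\<close> \<open>c1 \<in> B1\<close> \<open>a2 \<in> B2\<close> \<open>c2 \<in> B2\<close> by blast
  qed
next
  fix c x assume "v c \<le> 1" "x \<in> {b1 + b2 | b1 b2. b1 \<in> B1 \<and> b2 \<in> B2}"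
  then obtain a1 a2 where "x = a1 + a2" "a1 \<in> B1" "a2 \<in> B2" "v c \<le> 1" by blast
  then show "smul c x \<in> {b1 + b2 | b1 b2. b1 \<in> B1 \<and> b2 \<in> B2}"
  proof -
    have "smul c x = smul c a1 + smul c a2" using \<open>x = a1 + a2\<close> smul_add by simp
    moreover have "smul c a1 \<in> B1" using ac_smul[OF assms(1) \<open>v c \<le> 1\<close> \<open>a1 \<in> B1\<close>] .
    moreover have "smul c a2 \<in> B2" using ac_smul[OF assms(2) \<open>v c \<le> 1\<close> \<open>a2 \<in> B2\<close>] .
    ultimately show ?thesis by blast
  qed
qed

lemma ball_ac: assumes "S \<subseteq> P" "e > 0"
  shows "abs_convex v smul {y. \<forall>p\<in>S. p y < e}"
  unfolding abs_convex_def
proof (intro conjI allI ballI impI)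
  show "0 \<in> {y. \<forall>p\<in>S. p y < e}"
  proof (safe)
    fix p assume "p \<in> S" then have "p \<in> P" using assms(1) by blast
    then have "p 0 = 0" by (rule p_zero)
    then show "p 0 < e" using assms(2) by simp
  qed
  show "\<And>x y. x \<in> {y. \<forall>p\<in>S. p y < e} \<Longrightarrow> y \<in> {y. \<forall>p\<in>S. p y < e} \<Longrightarrow> x + y \<in> {y. \<forall>p\<in>S. p y < e}"
    using assms p_lt_add by blast
  show "\<And>c x. v c \<le> 1 \<Longrightarrow> x \<in> {y. \<forall>p\<in>S. p y < e} \<Longrightarrow> smul c x \<in> {y. \<forall>p\<in>S. p y < e}"
  proof safe
    fix c x p assume "v c \<le> 1" "\<forall>p\<in>S. p x < e" "p \<in> S"
    then have "p \<in> P" "p x < e" using assms(1) by auto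
    then show "p (smul c x) < e" using p_smul_le[OF \<open>p \<in> P\<close> \<open>v c \<le> 1\<close>, of x] by linarith
  qed
qed

lemma nconv_mem: assumes "abs_convex v smul B" "w \<in> (\<lambda>b. x + b) ` B"
  shows "z \<in> (\<lambda>b. x + b) ` B \<longleftrightarrow> z - w \<in> B"
proof
  obtain b' where b': "b' \<in> B" "w = x + b'" using assms by blast
  show "z \<in> (\<lambda>b. x + b) ` B \<Longrightarrow> z - w \<in> B"
  proof -
    assume "z \<in> (\<lambda>b. x + b) ` B"
    then obtain b where "b \<in> B" "z = x + b" by blast
    then show ?thesis using b' ac_diff[OF assms(1), of b b'] by simp
  qed
  show "z - w \<in> B \<Longrightarrow> z \<in> (\<lambda>b. x + b) ` B"
  proof -
    assume "z - w \<in> B"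
    then have "b' + (z - w) \<in> B" using ac_add[OF assms(1)] b' by blast
    moreover have "z = x + (b' + (z - w))" using b' by simp
    ultimately show ?thesis by blast
  qed
qed

lemma nconv_recenter: assumes "nconvex v smul C" "w \<in> C"
  obtains B where "abs_convex v smul B" "\<And>z. z \<in> C \<longleftrightarrow> z - w \<in> B"
proof -
  obtain x B where xB: "abs_convex v smul B" "C = (\<lambda>b. x + b) ` B" using assms(1) unfolding nconvex_def by blast
  have "w \<in> (\<lambda>b. x + b) ` B" using assms(2) xB(2) by simp
  note m = nconv_mem[OF xB(1) this]
  show ?thesis
  proof (rule that[OF xB(1)])
    fix z show "z \<in> C \<longleftrightarrow> z - w \<in> B" unfolding xB(2) by (rule m)
  qed
qed

lemma nconvexI: assumes "abs_convex v smul B" "\<And>z. z \<in> C \<longleftrightarrow> z - w \<in> B"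
  shows "nconvex v smul C"
proof -
  have "C = (\<lambda>b. w + b) ` B"
  proof (rule set_eqI)
    fix z
    have "z \<in> (\<lambda>b. w + b) ` B \<longleftrightarrow> z - w \<in> B"
    proof
      assume "z \<in> (\<lambda>b. w + b) ` B"
      then obtain b where "b \<in> B" "z = w + b" by blast
      then show "z - w \<in> B" by simp
    next
      assume "z - w \<in> B"
      then show "z \<in> (\<lambda>b. w + b) ` B" using image_eqI[of z "\<lambda>b. w + b" "z - w" B] by simp
    qed
    then show "z \<in> C \<longleftrightarrow> z \<in> (\<lambda>b. w + b) ` B" using assms(2)[of z] by simp
  qed
  then show ?thesis unfolding nconvex_def by (intro exI[of _ w] exI[of _ B] conjI assms(1))
qed

lemma nconv_Int: assumes "nconvex v smul C1" "nconvex v smul C2" "w \<in> C1" "w \<in> C2"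
  shows "nconvex v smul (C1 \<inter> C2)"
proof -
  obtain B1 where 1: "abs_convex v smul B1" "\<And>z. z \<in> C1 \<longleftrightarrow> z - w \<in> B1" using nconv_recenter[OF assms(1,3)] by blast
  obtain B2 where 2: "abs_convex v smul B2" "\<And>z. z \<in> C2 \<longleftrightarrow> z - w \<in> B2" using nconv_recenter[OF assms(2,4)] by blast
  show ?thesis
  proof (rule nconvexI[of "B1 \<inter> B2" _ w])
    show "abs_convex v smul (B1 \<inter> B2)" using ac_Int 1(1) 2(1) by blast
    fix z show "z \<in> C1 \<inter> C2 \<longleftrightarrow> z - w \<in> B1 \<inter> B2" using 1(2)[of z] 2(2)[of z] by blast
  qed
qed

lemma ac_nconv: "abs_convex v smul A \<Longrightarrow> nconvex v smul A"
  unfolding nconvex_def by (rule exI[of _ 0], auto)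

end



lemma max_exists:
  assumes F0: "convex_filter_on v smul A F0"
  shows "\<exists>H. max_convex_filter_on v smul A H \<and> H \<le> F0"
proof -
  define cf where "cf = convex_filter_on v smul A"
  define Z where "Z = {F. cf F \<and> F \<le> F0}"
  define R where "R = (\<lambda>F G::'b filter. G \<le> F)"
  have po: "partial_order_on Z (relation_of R Z)"
    unfolding partial_order_on_def preorder_on_def refl_on_def trans_def antisym_on_def relation_of_def R_def
    by auto
  have ch: "\<exists>u \<in> Z. \<forall>a \<in> C. R a u" if C: "C \<in> Chains (relation_of R Z)" for C
  proof (cases "C = {}")
    case True
    then show ?thesis using F0 unfolding Z_def cf_def by auto
  next
    case False
    have CZ: "C \<subseteq> Z" using C False unfolding Chains_def relation_of_def by blast
    have dir: "\<exists>x\<in>C. x \<le> inf F G" if "F \<in> C" "G \<in> C" for F G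
    proof -
      have "G \<le> F \<or> F \<le> G" using C that unfolding Chains_def relation_of_def R_def by blast
      then show ?thesis using that by (metis inf.absorb_iff2 inf.orderE order_refl)
    qed
    have ev: "eventually P (Inf C) \<longleftrightarrow> (\<exists>b\<in>C. eventually P b)" for P
      by (rule eventually_Inf_base[OF False dir]) 
    have low: "Inf C \<le> G" if "G \<in> C" for G using that by (rule Inf_lower)
    have cfC: "cf G" and leC: "G \<le> F0" if "G \<in> C" for G using that CZ unfolding Z_def by auto
    obtain G0 where G0: "G0 \<in> C" using False by blast
    have "cf (Inf C)"
      unfolding cf_def convex_filter_on_def
    proof (intro conjI allI impI)
      show "Inf C \<noteq> bot"
      proof
        assume "Inf C = bot"
        then have "eventually (\<lambda>x. False) (Inf C)" by simp
        then obtain b where "b \<in> C" "eventually (\<lambda>x. False) b" using ev by blast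
        then have "b = bot" by (simp add: eventually_False)
        then show False using cfC[OF \<open>b \<in> C\<close>] unfolding cf_def convex_filter_on_def by blast
      qed
      show "eventually (\<lambda>x. x \<in> A) (Inf C)"
        using ev G0 cfC[OF G0] unfolding cf_def convex_filter_on_def by blast
      fix X assume "eventually (\<lambda>x. x \<in> X) (Inf C)"
      then obtain b where b: "b \<in> C" "eventually (\<lambda>x. x \<in> X) b" using ev by blast
      then obtain D where D: "nconvex v smul D" "D \<subseteq> A" "eventually (\<lambda>x. x \<in> D) b" "D \<subseteq> X"
        using cfC[OF b(1)] unfolding cf_def convex_filter_on_def by blast
      have "eventually (\<lambda>x. x \<in> D) (Inf C)" using ev D(3) b(1) by blast
      then show "\<exists>C'. nconvex v smul C' \<and> C' \<subseteq> A \<and> eventually (\<lambda>x. x \<in> C') (Inf C) \<and> C' \<subseteq> X"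
        using D by blast
    qed
    moreover have "Inf C \<le> F0" using low[OF G0] leC[OF G0] by (rule order_trans)
    ultimately have "Inf C \<in> Z" unfolding Z_def by blast
    then show ?thesis using low unfolding R_def by blast
  qed
  obtain m where m: "m \<in> Z" "\<And>a. a \<in> Z \<Longrightarrow> R m a \<Longrightarrow> a = m"
    using predicate_Zorn[OF po ch] by blast
  have "max_convex_filter_on v smul A m"
    unfolding max_convex_filter_on_def
  proof (intro conjI allI impI)
    show "convex_filter_on v smul A m" using m(1) unfolding Z_def cf_def by blast
    fix G assume G: "convex_filter_on v smul A G \<and> G \<le> m"
    then have "G \<in> Z" using m(1) unfolding Z_def cf_def by (auto intro: order_trans)
    then show "G = m" using m(2) G unfolding R_def by blast
  qed
  then show ?thesis using m(1) unfolding Z_def by blast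
qed




lemma openin_sn: "openin (seminorm_topology P) U \<longleftrightarrow> seminorm_open P U"
proof -
  have "openin (topology (seminorm_open P)) = seminorm_open P"
    by (rule topology_inverse'[OF istopology_seminorm_open])
  then show ?thesis unfolding seminorm_topology_def by simp
qed

lemma topspace_sn: "topspace (seminorm_topology P) = UNIV"
proof -
  have "seminorm_open P UNIV" unfolding seminorm_open_def
    by (intro ballI exI[of _ "{}"] exI[of _ "1::real"]) auto
  then have "openin (seminorm_topology P) UNIV" by (simp add: openin_sn)
  then show ?thesis using openin_subset by blast
qed

context LC begin

lemma ball_open: assumes "finite S" "S \<subseteq> P" "e > 0"
  shows "seminorm_open P {y. \<forall>p\<in>S. p (y - x) < e}"
  unfolding seminorm_open_def
proof (intro ballI exI conjI)
  fix z assume z: "z \<in> {y. \<forall>p\<in>S. p (y - x) < e}"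
  show "finite S" "S \<subseteq> P" "e > 0" by fact+
  show "{y. \<forall>p\<in>S. p (y - z) < e} \<subseteq> {y. \<forall>p\<in>S. p (y - x) < e}"
  proof safe
    fix y p assume y: "\<forall>p\<in>S. p (y - z) < e" and p: "p \<in> S"
    have pP: "p \<in> P" using p assms(2) by blast
    have "p (y - z) < e" "p (z - x) < e" using y z p by auto
    then have "p ((y - z) + (z - x)) < e" by (rule p_lt_add[OF pP])
    then show "p (y - x) < e" by simp
  qed
qed

lemma closure_char: "x \<in> seminorm_topology P closure_of A \<longleftrightarrow>
   (\<forall>S e. finite S \<and> S \<subseteq> P \<and> e > 0 \<longrightarrow> (\<exists>a\<in>A. \<forall>p\<in>S. p (a - x) < e))"
proof
  assume x: "x \<in> seminorm_topology P closure_of A"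
  have cx: "\<forall>T. x \<in> T \<and> openin (seminorm_topology P) T \<longrightarrow> (\<exists>y\<in>A. y \<in> T)"
  proof -
    have "x \<in> topspace (seminorm_topology P) \<and> (\<forall>T. x \<in> T \<and> openin (seminorm_topology P) T \<longrightarrow> (\<exists>y\<in>A. y \<in> T))"
      using x unfolding closure_of_def by (rule CollectD)
    then show ?thesis by (rule conjunct2)
  qed
  show "\<forall>S e. finite S \<and> S \<subseteq> P \<and> e > 0 \<longrightarrow> (\<exists>a\<in>A. \<forall>p\<in>S. p (a - x) < e)"
  proof (intro allI impI)
    fix S e assume Se: "finite S \<and> S \<subseteq> P \<and> (e::real) > 0"
    have "seminorm_open P {y. \<forall>p\<in>S. p (y - x) < e}"
      by (rule ball_open) (use Se in auto)
    then have op: "openin (seminorm_topology P) {y. \<forall>p\<in>S. p (y - x) < e}"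
      by (simp only: openin_sn)
    have xin: "x \<in> {y. \<forall>p\<in>S. p (y - x) < e}"
    proof safe
      fix p assume "p \<in> S" then have "p \<in> P" using Se by blast
      then show "p (x - x) < e" using p_zero[of p] Se by simp
    qed
    have "\<exists>y\<in>A. y \<in> {y. \<forall>p\<in>S. p (y - x) < e}"
      using cx[rule_format, of "{y. \<forall>p\<in>S. p (y - x) < e}"] xin op by simp
    then show "\<exists>a\<in>A. \<forall>p\<in>S. p (a - x) < e" by simp
  qed
next
  assume H: "\<forall>S e. finite S \<and> S \<subseteq> P \<and> e > 0 \<longrightarrow> (\<exists>a\<in>A. \<forall>p\<in>S. p (a - x) < e)"
  show "x \<in> seminorm_topology P closure_of A"
    unfolding closure_of_def
  proof (rule CollectI, intro conjI allI impI)
    show "x \<in> topspace (seminorm_topology P)" by (simp add: topspace_sn)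
    fix T assume T: "x \<in> T \<and> openin (seminorm_topology P) T"
    then have "seminorm_open P T" by (simp only: openin_sn)
    then have "\<exists>S e. finite S \<and> S \<subseteq> P \<and> e > 0 \<and> {y. \<forall>p\<in>S. p (y - x) < e} \<subseteq> T"
      using T unfolding seminorm_open_def by (elim conjE bspec)
    then obtain S e where Se: "finite S" "S \<subseteq> P" "e > 0" "{y. \<forall>p\<in>S. p (y - x) < e} \<subseteq> T"
      by (elim exE conjE)
    have "\<exists>a\<in>A. \<forall>p\<in>S. p (a - x) < e" using H[rule_format, of S e] Se(1-3) by simp
    then obtain a where "a \<in> A" "\<forall>p\<in>S. p (a - x) < e" by (elim bexE)
    then show "\<exists>y\<in>A. y \<in> T" using Se(4) by blast
  qed
qed

lemma zero_nbhd_ball: assumes "zero_nbhd P U"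
  shows "\<exists>S e. finite S \<and> S \<subseteq> P \<and> e > 0 \<and> {y. \<forall>p\<in>S. p y < e} \<subseteq> U"
proof -
  obtain W where W: "openin (seminorm_topology P) W" "0 \<in> W" "W \<subseteq> U"
    using assms unfolding zero_nbhd_def by (elim exE conjE)
  have "seminorm_open P W" using W(1) by (simp only: openin_sn)
  then have "\<exists>S e. finite S \<and> S \<subseteq> P \<and> e > 0 \<and> {y. \<forall>p\<in>S. p (y - 0) < e} \<subseteq> W"
    using W(2) unfolding seminorm_open_def by (rule bspec)
  then obtain S e where Se: "finite S" "S \<subseteq> P" "e > 0" "{y. \<forall>p\<in>S. p (y - 0) < e} \<subseteq> W"
    by (elim exE conjE)
  have eq: "{y. \<forall>p\<in>S. p y < e} = {y. \<forall>p\<in>S. p (y - 0) < e}" by simp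
  have "{y. \<forall>p\<in>S. p y < e} \<subseteq> U" unfolding eq using Se(4) W(3) by (rule subset_trans)
  then show ?thesis using Se(1-3) by (intro exI conjI)
qed

lemma ball_zero_nbhd: assumes "finite S" "S \<subseteq> P" "e > 0"
  shows "zero_nbhd P {y. \<forall>p\<in>S. p y < e}"
proof -
  have eq: "{y. \<forall>p\<in>S. p y < e} = {y. \<forall>p\<in>S. p (y - 0) < e}" by simp
  have "seminorm_open P {y. \<forall>p\<in>S. p y < e}" unfolding eq by (rule ball_open[OF assms])
  then have op: "openin (seminorm_topology P) {y. \<forall>p\<in>S. p y < e}" by (simp only: openin_sn)
  have z: "0 \<in> {y. \<forall>p\<in>S. p y < e}" using ac_0[OF ball_ac[OF assms(2,3)]] .
  show ?thesis unfolding zero_nbhd_def by (rule exI[of _ "{y. \<forall>p\<in>S. p y < e}"]) (use op z in simp)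
qed

lemma closure_ac: assumes A: "abs_convex v smul A"
  shows "abs_convex v smul (seminorm_topology P closure_of A)"
proof -
  let ?cl = "seminorm_topology P closure_of A"
  have c0: "0 \<in> ?cl" unfolding closure_char
  proof (intro allI impI)
    fix S e assume Se: "finite S \<and> S \<subseteq> P \<and> (e::real) > 0"
    show "\<exists>a\<in>A. \<forall>p\<in>S. p (a - 0) < e"
    proof (intro bexI ballI)
      fix p assume "p \<in> S" then have "p \<in> P" using Se by blast
      then show "p (0 - 0) < e" using p_zero[of p] Se by simp
    qed (rule ac_0[OF A])
  qed
  have cadd: "x + y \<in> ?cl" if x: "x \<in> ?cl" and y: "y \<in> ?cl" for x y
    unfolding closure_char
  proof (intro allI impI)
    fix S e assume Se: "finite S \<and> S \<subseteq> P \<and> (e::real) > 0"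
    obtain a where a: "a \<in> A" "\<forall>p\<in>S. p (a - x) < e"
      using closure_char[THEN iffD1, OF x, rule_format, OF Se] by (elim bexE)
    obtain b where b: "b \<in> A" "\<forall>p\<in>S. p (b - y) < e"
      using closure_char[THEN iffD1, OF y, rule_format, OF Se] by (elim bexE)
    show "\<exists>a\<in>A. \<forall>p\<in>S. p (a - (x + y)) < e"
    proof (intro bexI ballI)
      fix p assume p: "p \<in> S" then have pP: "p \<in> P" using Se by blast
      have "p (a - x) < e" "p (b - y) < e" using a b p by auto
      then have "p ((a - x) + (b - y)) < e" by (rule p_lt_add[OF pP])
      then show "p (a + b - (x + y)) < e" by (simp add: algebra_simps)
    qed (rule ac_add[OF A a(1) b(1)])
  qed
  have csmul: "smul c x \<in> ?cl" if c: "v c \<le> 1" and x: "x \<in> ?cl" for c x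
    unfolding closure_char
  proof (intro allI impI)
    fix S e assume Se: "finite S \<and> S \<subseteq> P \<and> (e::real) > 0"
    obtain a where a: "a \<in> A" "\<forall>p\<in>S. p (a - x) < e"
      using closure_char[THEN iffD1, OF x, rule_format, OF Se] by (elim bexE)
    show "\<exists>a\<in>A. \<forall>p\<in>S. p (a - smul c x) < e"
    proof (intro bexI ballI)
      fix p assume p: "p \<in> S" then have pP: "p \<in> P" using Se by blast
      have "p (smul c (a - x)) \<le> p (a - x)" by (rule p_smul_le[OF pP c])
      then show "p (smul c a - smul c x) < e" using a p smul_diff by auto
    qed (rule ac_smul[OF A c a(1)])
  qed
  show ?thesis unfolding abs_convex_def
  proof (intro conjI ballI allI impI)
    show "0 \<in> ?cl" by (rule c0)
    show "x + y \<in> ?cl" if "x \<in> ?cl" "y \<in> ?cl" for x y using that by (rule cadd)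
    show "smul c x \<in> ?cl" if "v c \<le> 1" "x \<in> ?cl" for c x using that by (rule csmul)
  qed
qed

lemma nconv_plus: assumes "nconvex v smul C" "abs_convex v smul Bl"
  shows "nconvex v smul {x + y | x y. x \<in> C \<and> y \<in> Bl}"
proof -
  obtain c0 B where B: "abs_convex v smul B" "C = (\<lambda>b. c0 + b) ` B" using assms(1) unfolding nconvex_def by blast
  have "{x + y | x y. x \<in> C \<and> y \<in> Bl} = (\<lambda>b. c0 + b) ` {b1 + b2 | b1 b2. b1 \<in> B \<and> b2 \<in> Bl}"
  proof (intro set_eqI iffI)
    fix z assume "z \<in> {x + y | x y. x \<in> C \<and> y \<in> Bl}"
    then obtain x y where "z = x + y" "x \<in> C" "y \<in> Bl" by blast
    then obtain b where "b \<in> B" "x = c0 + b" using B(2) by blast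
    then have "z = c0 + (b + y)" "b + y \<in> {b1 + b2 | b1 b2. b1 \<in> B \<and> b2 \<in> Bl}"
      using \<open>z = x + y\<close> \<open>y \<in> Bl\<close> by (auto simp: algebra_simps)
    then show "z \<in> (\<lambda>b. c0 + b) ` {b1 + b2 | b1 b2. b1 \<in> B \<and> b2 \<in> Bl}" by blast
  next
    fix z assume "z \<in> (\<lambda>b. c0 + b) ` {b1 + b2 | b1 b2. b1 \<in> B \<and> b2 \<in> Bl}"
    then obtain b1 b2 where "z = c0 + (b1 + b2)" "b1 \<in> B" "b2 \<in> Bl" by blast
    then have "z = (c0 + b1) + b2" "c0 + b1 \<in> C" using B(2) by (auto simp: algebra_simps)
    then show "z \<in> {x + y | x y. x \<in> C \<and> y \<in> Bl}" using \<open>b2 \<in> Bl\<close> by blast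
  qed
  then show ?thesis unfolding nconvex_def using ac_sum[OF B(1) assms(2)] by blast
qed

end



context LC begin

lemma closure_cpre: assumes cpA: "c_precompact v smul P A"
  shows "c_precompact v smul P (seminorm_topology P closure_of A)"
proof -
  let ?cl = "seminorm_topology P closure_of A"
  have acA: "abs_convex v smul A" using cpA unfolding c_precompact_def by blast
  have acCl: "abs_convex v smul ?cl" by (rule closure_ac[OF acA])
  have ncCl: "nconvex v smul ?cl" by (rule ac_nconv[OF acCl])
  have ncA: "nconvex v smul A" by (rule ac_nconv[OF acA])
  define Bs where "Bs = {(S, e). finite S \<and> S \<subseteq> P \<and> (e::real) > 0}"
  define N where "N = (INF b\<in>Bs. principal {y. \<forall>p\<in>fst b. p y < snd b})"
  have evN: "eventually Q N \<longleftrightarrow> (\<exists>b\<in>Bs. eventually Q (principal {y. \<forall>p\<in>fst b. p y < snd b}))" for Q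
    unfolding N_def
  proof (rule eventually_INF_base)
    have "({}, 1) \<in> Bs" unfolding Bs_def by simp
    then show "Bs \<noteq> {}" by blast
    fix a b assume a: "a \<in> Bs" and b: "b \<in> Bs"
    let ?x = "(fst a \<union> fst b, min (snd a) (snd b))"
    have "?x \<in> Bs" using a b unfolding Bs_def by auto
    moreover have "principal {y. \<forall>p\<in>fst ?x. p y < snd ?x} \<le>
      inf (principal {y. \<forall>p\<in>fst a. p y < snd a}) (principal {y. \<forall>p\<in>fst b. p y < snd b})"
      by auto
    ultimately show "\<exists>x\<in>Bs. principal {y. \<forall>p\<in>fst x. p y < snd x} \<le>
      inf (principal {y. \<forall>p\<in>fst a. p y < snd a}) (principal {y. \<forall>p\<in>fst b. p y < snd b})" by blast
  qed
  have evN_intro: "eventually (\<lambda>y. y \<in> {y. \<forall>p\<in>S. p y < e}) N" if "finite S" "S \<subseteq> P" "e > 0" for S e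
    unfolding evN
    by (rule bexI[of _ "(S, e)"]) (use that in \<open>auto simp: Bs_def eventually_principal\<close>)
  have evN_elim: "\<exists>S e. finite S \<and> S \<subseteq> P \<and> e > 0 \<and> (\<forall>y. (\<forall>p\<in>S. p y < e) \<longrightarrow> Q y)"
    if "eventually Q N" for Q
    using that unfolding evN Bs_def eventually_principal by auto
  show ?thesis unfolding c_precompact_def
  proof (intro conjI allI impI)
    show "abs_convex v smul ?cl" by (rule acCl)
    fix F assume maxF: "max_convex_filter_on v smul ?cl F"
    have cfF: "convex_filter_on v smul ?cl F" using maxF unfolding max_convex_filter_on_def by blast
    have Fnb: "F \<noteq> bot" and FCl: "eventually (\<lambda>x. x \<in> ?cl) F" using cfF unfolding convex_filter_on_def by auto
    have Fconv: "\<exists>C. nconvex v smul C \<and> C \<subseteq> ?cl \<and> eventually (\<lambda>x. x \<in> C) F \<and> C \<subseteq> X"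
      if "eventually (\<lambda>x. x \<in> X) F" for X
      using cfF that unfolding convex_filter_on_def by blast
    define H where "H = inf (filtermap (\<lambda>p. fst p + snd p) (F \<times>\<^sub>F N)) (principal A)"
    have evH_intro: "eventually Q H"
      if X: "eventually (\<lambda>x. x \<in> X) F" and Se: "finite S" "S \<subseteq> P" "e > 0"
        and Q: "\<And>x y. x \<in> X \<Longrightarrow> (\<forall>p\<in>S. p y < e) \<Longrightarrow> x + y \<in> A \<Longrightarrow> Q (x + y)" for Q X S e
      unfolding H_def eventually_inf_principal eventually_filtermap eventually_prod_filter
      by (rule exI[of _ "\<lambda>x. x \<in> X"], rule exI[of _ "\<lambda>y. y \<in> {y. \<forall>p\<in>S. p y < e}"])
        (use X evN_intro[OF Se] Q in auto)
    have evH_elim: "\<exists>X S e. eventually (\<lambda>x. x \<in> X) F \<and> finite S \<and> S \<subseteq> P \<and> e > 0 \<and>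
        (\<forall>x y. x \<in> X \<longrightarrow> (\<forall>p\<in>S. p y < e) \<longrightarrow> x + y \<in> A \<longrightarrow> Q (x + y))"
      if "eventually Q H" for Q
    proof -
      have "\<exists>Pf Pg. eventually Pf F \<and> eventually Pg N \<and> (\<forall>x y. Pf x \<longrightarrow> Pg y \<longrightarrow> x + y \<in> A \<longrightarrow> Q (x + y))"
        using that unfolding H_def eventually_inf_principal eventually_filtermap eventually_prod_filter
        by simp
      then obtain Pf Pg where PP: "eventually Pf F" "eventually Pg N"
        "\<forall>x y. Pf x \<longrightarrow> Pg y \<longrightarrow> x + y \<in> A \<longrightarrow> Q (x + y)"
        by (elim exE conjE)
      obtain S e where Se: "finite S" "S \<subseteq> P" "e > 0" "\<forall>y. (\<forall>p\<in>S. p y < e) \<longrightarrow> Pg y"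
        using evN_elim[OF PP(2)] by blast
      show ?thesis
        by (rule exI[of _ "{x. Pf x}"], rule exI[of _ S], rule exI[of _ e]) (use PP Se in auto)
    qed
    have near: "\<exists>x\<in>X. \<exists>y. (\<forall>p\<in>S. p y < e) \<and> x + y \<in> A"
      if X: "eventually (\<lambda>x. x \<in> X) F" and Se: "finite S" "S \<subseteq> P" "e > 0" for X S e
    proof -
      have "eventually (\<lambda>x. x \<in> X \<and> x \<in> ?cl) F" using X FCl by (rule eventually_conj)
      then obtain x where x: "x \<in> X" "x \<in> ?cl" using eventually_happens'[OF Fnb] by blast
      then obtain a where a: "a \<in> A" "\<forall>p\<in>S. p (a - x) < e" using Se unfolding closure_char by blast
      show ?thesis using x a by (intro bexI[of _ x] exI[of _ "a - x"]) auto
    qed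
    have cfH: "convex_filter_on v smul A H"
      unfolding convex_filter_on_def
    proof (intro conjI allI impI)
      show "H \<noteq> bot"
      proof
        assume "H = bot"
        then have "eventually (\<lambda>x. False) H" by simp
        then obtain X S e where XSe: "eventually (\<lambda>x. x \<in> X) F" "finite S" "S \<subseteq> P" "e > 0"
            "\<forall>x y. x \<in> X \<longrightarrow> (\<forall>p\<in>S. p y < e) \<longrightarrow> x + y \<in> A \<longrightarrow> False"
          using evH_elim by blast
        show False using near[OF XSe(1-4)] XSe(5) by blast
      qed
      show "eventually (\<lambda>x. x \<in> A) H"
        by (rule evH_intro[of UNIV "{}" 1]) auto
      fix Y assume "eventually (\<lambda>x. x \<in> Y) H"
      then obtain X S e where XSe: "eventually (\<lambda>x. x \<in> X) F" "finite S" "S \<subseteq> P" "e > 0"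
            "\<forall>x y. x \<in> X \<longrightarrow> (\<forall>p\<in>S. p y < e) \<longrightarrow> x + y \<in> A \<longrightarrow> x + y \<in> Y"
        using evH_elim[of "\<lambda>x. x \<in> Y"] by blast
      obtain C where C: "nconvex v smul C" "C \<subseteq> ?cl" "eventually (\<lambda>x. x \<in> C) F" "C \<subseteq> X"
        using Fconv[OF XSe(1)] by blast
      let ?Bl = "{y. \<forall>p\<in>S. p y < e}"
      let ?W = "{x + y | x y. x \<in> C \<and> y \<in> ?Bl} \<inter> A"
      obtain w where w: "w \<in> ?W" using near[OF C(3) XSe(2-4)] by blast
      have ncW: "nconvex v smul ?W"
        by (rule nconv_Int[OF nconv_plus[OF C(1) ball_ac[OF XSe(3,4)]] ncA, of w]) (use w in auto)
      have evW: "eventually (\<lambda>x. x \<in> ?W) H"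
        by (rule evH_intro[OF C(3) XSe(2-4)]) auto
      have "?W \<subseteq> Y" using XSe(5) C(4) by blast
      then show "\<exists>C. nconvex v smul C \<and> C \<subseteq> A \<and> eventually (\<lambda>x. x \<in> C) H \<and> C \<subseteq> Y"
        using ncW evW by blast
    qed
    obtain H' where H': "max_convex_filter_on v smul A H'" "H' \<le> H"
      using max_exists[OF cfH] by blast
    have cfH': "convex_filter_on v smul A H'" using H'(1) unfolding max_convex_filter_on_def by blast
    have H'nb: "H' \<noteq> bot" using cfH' unfolding convex_filter_on_def by blast
    have cauH': "cauchy_filter_sn P H'" using cpA H'(1) unfolding c_precompact_def by blast
    show "cauchy_filter_sn P F" unfolding cauchy_filter_sn_def
    proof (intro allI impI)
      fix U assume U: "zero_nbhd P U"
      obtain S0 e0 where S0: "finite S0" "S0 \<subseteq> P" "e0 > 0" "{y. \<forall>p\<in>S0. p y < e0} \<subseteq> U"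
        using zero_nbhd_ball[OF U] by blast
      let ?Bl = "{y. \<forall>p\<in>S0. p y < e0}"
      have acBl: "abs_convex v smul ?Bl" by (rule ball_ac[OF S0(2,3)])
      obtain D0 where D0: "eventually (\<lambda>x. x \<in> D0) H'" "{x - y | x y. x \<in> D0 \<and> y \<in> D0} \<subseteq> ?Bl"
        using cauH' ball_zero_nbhd[OF S0(1-3)] unfolding cauchy_filter_sn_def by blast
      obtain D where D: "nconvex v smul D" "D \<subseteq> A" "eventually (\<lambda>x. x \<in> D) H'" "D \<subseteq> D0"
        using cfH' D0(1) unfolding convex_filter_on_def by blast
      let ?W = "{d + b | d b. d \<in> D \<and> b \<in> ?Bl} \<inter> ?cl"
      have K: "\<exists>c\<in>C. c \<in> ?W" if C: "eventually (\<lambda>x. x \<in> C) F" for C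
      proof -
        have CCl: "eventually (\<lambda>x. x \<in> C \<inter> ?cl) F" using C FCl by (simp add: eventually_conj_iff)
        have "eventually (\<lambda>z. \<exists>c\<in>C \<inter> ?cl. \<exists>b\<in>?Bl. z = c + b) H"
          by (rule evH_intro[OF CCl S0(1-3)]) auto
        then have "eventually (\<lambda>z. \<exists>c\<in>C \<inter> ?cl. \<exists>b\<in>?Bl. z = c + b) H'"
          using H'(2) by (rule filter_leD[rotated])
        then have "eventually (\<lambda>z. (\<exists>c\<in>C \<inter> ?cl. \<exists>b\<in>?Bl. z = c + b) \<and> z \<in> D) H'"
          using D(3) by (rule eventually_conj)
        then obtain z c b where zcb: "z \<in> D" "c \<in> C" "c \<in> ?cl" "b \<in> ?Bl" "z = c + b"
          using eventually_happens'[OF H'nb] by blast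
        have "- b \<in> ?Bl" by (rule ac_neg[OF acBl zcb(4)])
        moreover have "c = z + (- b)" using zcb(5) by simp
        ultimately have "c \<in> ?W" using zcb by blast
        then show ?thesis using zcb(2) by blast
      qed
      obtain w0 where w0: "w0 \<in> ?W" using K[OF FCl] by blast
      have ncW: "nconvex v smul ?W"
        by (rule nconv_Int[OF nconv_plus[OF D(1) acBl] ncCl, of w0]) (use w0 in auto)
      define G where "G = inf F (principal ?W)"
      have cfG: "convex_filter_on v smul ?cl G"
        unfolding convex_filter_on_def
      proof (intro conjI allI impI)
        show "G \<noteq> bot"
        proof
          assume "G = bot"
          then have "eventually (\<lambda>x. False) G" by simp
          then have "eventually (\<lambda>x. x \<in> - ?W) F" unfolding G_def eventually_inf_principal by simp
          then show False using K by blast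
        qed
        show "eventually (\<lambda>x. x \<in> ?cl) G" unfolding G_def eventually_inf_principal
          using FCl by (rule eventually_mono) auto
        fix Y assume "eventually (\<lambda>x. x \<in> Y) G"
        then have "eventually (\<lambda>x. x \<in> {x. x \<in> ?W \<longrightarrow> x \<in> Y}) F"
          unfolding G_def eventually_inf_principal by simp
        then obtain C where C: "nconvex v smul C" "C \<subseteq> ?cl" "eventually (\<lambda>x. x \<in> C) F"
          "C \<subseteq> {x. x \<in> ?W \<longrightarrow> x \<in> Y}" using Fconv by blast
        obtain c where c: "c \<in> C" "c \<in> ?W" using K[OF C(3)] by blast
        have "nconvex v smul (C \<inter> ?W)" by (rule nconv_Int[OF C(1) ncW c])
        moreover have "C \<inter> ?W \<subseteq> ?cl" using C(2) by blast
        moreover have "eventually (\<lambda>x. x \<in> C \<inter> ?W) G" unfolding G_def eventually_inf_principal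
          using C(3) by (rule eventually_mono) auto
        moreover have "C \<inter> ?W \<subseteq> Y" using C(4) by blast
        ultimately show "\<exists>C'. nconvex v smul C' \<and> C' \<subseteq> ?cl \<and> eventually (\<lambda>x. x \<in> C') G \<and> C' \<subseteq> Y"
          by blast
      qed
      have "G \<le> F" unfolding G_def by (rule inf_le1)
      then have "G = F" using maxF cfG unfolding max_convex_filter_on_def by blast
      moreover have "eventually (\<lambda>x. x \<in> ?W) G" unfolding G_def eventually_inf_principal by simp
      ultimately have evW: "eventually (\<lambda>x. x \<in> ?W) F" by simp
      have "{x - y | x y. x \<in> ?W \<and> y \<in> ?W} \<subseteq> U"
      proof (rule subsetI)
        fix z assume "z \<in> {x - y | x y. x \<in> ?W \<and> y \<in> ?W}"
        then obtain x y where z: "z = x - y" and x: "x \<in> ?W" and y: "y \<in> ?W" by blast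
        obtain d1 b1 where 1: "x = d1 + b1" "d1 \<in> D" "b1 \<in> ?Bl" using x by blast
        obtain d2 b2 where 2: "y = d2 + b2" "d2 \<in> D" "b2 \<in> ?Bl" using y by blast
        have "d1 - d2 \<in> ?Bl" using D0(2) D(4) 1(2) 2(2) by blast
        moreover have "b1 - b2 \<in> ?Bl" by (rule ac_diff[OF acBl 1(3) 2(3)])
        ultimately have "(d1 - d2) + (b1 - b2) \<in> ?Bl" by (rule ac_add[OF acBl])
        moreover have "x - y = (d1 - d2) + (b1 - b2)" using 1(1) 2(1) by (simp add: algebra_simps)
        ultimately show "z \<in> U" using S0(4) z by auto
      qed
      then show "\<exists>X. eventually (\<lambda>x. x \<in> X) F \<and> {x - y | x y. x \<in> X \<and> y \<in> X} \<subseteq> U"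
        using evW by blast
    qed
  qed
qed

end



lemma image_cpre:
  fixes smulE :: "'k::field \<Rightarrow> 'e::ab_group_add \<Rightarrow> 'e" and smulF :: "'k \<Rightarrow> 'f::ab_group_add \<Rightarrow> 'f"
  assumes LE: "LC v smulE PE" and LF: "LC v smulF PF"
    and lin: "Vector_Spaces.linear smulE smulF f"
    and cont: "continuous_map (seminorm_topology PE) (seminorm_topology PF) f"
    and cpA: "c_precompact v smulE PE A"
  shows "c_precompact v smulF PF (f ` A)"
proof -
  interpret LE: LC v smulE PE by (rule LE)
  interpret LF: LC v smulF PF by (rule LF)
  have fadd: "f (x + y) = f x + f y" for x y using lin unfolding Vector_Spaces.linear_iff by blast
  have fsmul: "f (smulE c x) = smulF c (f x)" for c x using lin unfolding Vector_Spaces.linear_iff by blast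
  have f0: "f 0 = 0" using fadd[of 0 0] by simp
  have fdiff: "f (x - y) = f x - f y" for x y
  proof -
    have "f (x - y) + f y = f x" using fadd[of "x - y" y] by simp
    then show ?thesis by (simp add: eq_diff_eq)
  qed
  have acA: "abs_convex v smulE A" using cpA unfolding c_precompact_def by blast
  have ac_img: "abs_convex v smulF (f ` B)" if B: "abs_convex v smulE B" for B
    unfolding abs_convex_def
  proof (intro conjI allI impI ballI)
    show "0 \<in> f ` B" using f0 LE.ac_0[OF B] by (metis image_eqI)
    fix x y assume "x \<in> f ` B" "y \<in> f ` B"
    then obtain a b where "a \<in> B" "b \<in> B" "x = f a" "y = f b" by blast
    then have "x + y = f (a + b)" "a + b \<in> B" using fadd LE.ac_add[OF B] by auto
    then show "x + y \<in> f ` B" by blast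
  next
    fix c x assume c: "v c \<le> 1" and "x \<in> f ` B"
    then obtain a where "a \<in> B" "x = f a" by blast
    then have "smulF c x = f (smulE c a)" "smulE c a \<in> B" using fsmul LE.ac_smul[OF B c] by auto
    then show "smulF c x \<in> f ` B" by blast
  qed
  have ac_pre: "abs_convex v smulE (f -` B)" if B: "abs_convex v smulF B" for B
    unfolding abs_convex_def
  proof (intro conjI allI impI ballI)
    show "0 \<in> f -` B" using f0 LF.ac_0[OF B] by simp
    fix x y assume "x \<in> f -` B" "y \<in> f -` B"
    then show "x + y \<in> f -` B" using fadd LF.ac_add[OF B] by simp
  next
    fix c x assume c: "v c \<le> 1" and "x \<in> f -` B"
    then show "smulE c x \<in> f -` B" using fsmul LF.ac_smul[OF B c] by simp
  qed
  have nc_img: "nconvex v smulF (f ` C)" if C: "nconvex v smulE C" for C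
  proof -
    obtain c0 B where B: "abs_convex v smulE B" "C = (\<lambda>b. c0 + b) ` B" using C unfolding nconvex_def by blast
    have "f ` C = (\<lambda>b. f c0 + b) ` (f ` B)" unfolding B(2) image_image fadd ..
    then show ?thesis unfolding nconvex_def using ac_img[OF B(1)] by blast
  qed
  have nc_pre: "nconvex v smulE (f -` C)" if C: "nconvex v smulF C" and w: "f w \<in> C" for C w
  proof -
    obtain B where B: "abs_convex v smulF B" "\<And>z. z \<in> C \<longleftrightarrow> z - f w \<in> B"
      using LF.nconv_recenter[OF C w] by blast
    show ?thesis
    proof (rule LE.nconvexI[of "f -` B" _ w])
      show "abs_convex v smulE (f -` B)" by (rule ac_pre[OF B(1)])
      fix z show "z \<in> f -` C \<longleftrightarrow> z - w \<in> f -` B" using B(2)[of "f z"] fdiff[of z w] by simp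
    qed
  qed
  show ?thesis unfolding c_precompact_def
  proof (intro conjI allI impI)
    show "abs_convex v smulF (f ` A)" by (rule ac_img[OF acA])
    fix G assume maxG: "max_convex_filter_on v smulF (f ` A) G"
    have cfG: "convex_filter_on v smulF (f ` A) G" using maxG unfolding max_convex_filter_on_def by blast
    have Gnb: "G \<noteq> bot" and GA: "eventually (\<lambda>x. x \<in> f ` A) G" using cfG unfolding convex_filter_on_def by auto
    define H where "H = inf (filtercomap f G) (principal A)"
    have cfH: "convex_filter_on v smulE A H"
      unfolding convex_filter_on_def
    proof (intro conjI allI impI)
      show "H \<noteq> bot"
      proof
        assume "H = bot"
        then have "eventually (\<lambda>x. False) H" by simp
        then have "eventually (\<lambda>x. x \<in> A \<longrightarrow> False) (filtercomap f G)"
          unfolding H_def eventually_inf_principal .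
        then obtain Q where Q: "eventually Q G" "\<forall>x. Q (f x) \<longrightarrow> x \<in> A \<longrightarrow> False"
          unfolding eventually_filtercomap by blast
        have "eventually (\<lambda>y. Q y \<and> y \<in> f ` A) G" using Q(1) GA by (rule eventually_conj)
        then obtain y where "Q y" "y \<in> f ` A" using eventually_happens'[OF Gnb] by blast
        then show False using Q(2) by blast
      qed
      show "eventually (\<lambda>x. x \<in> A) H" unfolding H_def eventually_inf_principal by simp
      fix Y assume "eventually (\<lambda>x. x \<in> Y) H"
      then have "eventually (\<lambda>x. x \<in> A \<longrightarrow> x \<in> Y) (filtercomap f G)"
        unfolding H_def eventually_inf_principal .
      then obtain Q where Q: "eventually Q G" "\<forall>x. Q (f x) \<longrightarrow> x \<in> A \<longrightarrow> x \<in> Y"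
        unfolding eventually_filtercomap by blast
      have "eventually (\<lambda>x. x \<in> Collect Q) G" using Q(1) by simp
      then obtain C where C: "nconvex v smulF C" "C \<subseteq> f ` A" "eventually (\<lambda>x. x \<in> C) G" "C \<subseteq> Collect Q"
        using cfG unfolding convex_filter_on_def by blast
      obtain y where "y \<in> C" using eventually_happens'[OF Gnb C(3)] by blast
      then obtain w where w: "w \<in> A" "f w \<in> C" using C(2) by blast
      let ?W = "f -` C \<inter> A"
      have "nconvex v smulE ?W" by (rule LE.nconv_Int[OF nc_pre[OF C(1) w(2)] LE.ac_nconv[OF acA], of w]) (use w in auto)
      moreover have "?W \<subseteq> A" by blast
      moreover have "eventually (\<lambda>x. x \<in> ?W) H"
        unfolding H_def eventually_inf_principal eventually_filtercomap
        by (rule exI[of _ "\<lambda>x. x \<in> C"]) (use C(3) in simp)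
      moreover have "?W \<subseteq> Y" using Q(2) C(4) by blast
      ultimately show "\<exists>C. nconvex v smulE C \<and> C \<subseteq> A \<and> eventually (\<lambda>x. x \<in> C) H \<and> C \<subseteq> Y" by blast
    qed
    obtain H' where H': "max_convex_filter_on v smulE A H'" "H' \<le> H"
      using max_exists[OF cfH] by blast
    have cfH': "convex_filter_on v smulE A H'" using H'(1) unfolding max_convex_filter_on_def by blast
    have cauH': "cauchy_filter_sn PE H'" using cpA H'(1) unfolding c_precompact_def by blast
    define G' where "G' = filtermap f H'"
    have cfG': "convex_filter_on v smulF (f ` A) G'"
      unfolding convex_filter_on_def
    proof (intro conjI allI impI)
      show "G' \<noteq> bot" using cfH' unfolding G'_def filtermap_bot_iff convex_filter_on_def by blast
      have "eventually (\<lambda>x. x \<in> A) H'" using cfH' unfolding convex_filter_on_def by blast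
      then show "eventually (\<lambda>x. x \<in> f ` A) G'" unfolding G'_def eventually_filtermap
        by (rule eventually_mono) simp
      fix Y assume "eventually (\<lambda>x. x \<in> Y) G'"
      then have "eventually (\<lambda>x. x \<in> f -` Y) H'" unfolding G'_def eventually_filtermap by simp
      then obtain D where D: "nconvex v smulE D" "D \<subseteq> A" "eventually (\<lambda>x. x \<in> D) H'" "D \<subseteq> f -` Y"
        using cfH' unfolding convex_filter_on_def by blast
      have "nconvex v smulF (f ` D)" by (rule nc_img[OF D(1)])
      moreover have "f ` D \<subseteq> f ` A" using D(2) by blast
      moreover have "eventually (\<lambda>x. x \<in> f ` D) G'" unfolding G'_def eventually_filtermap
        using D(3) by (rule eventually_mono) simp
      moreover have "f ` D \<subseteq> Y" using D(4) by blast
      ultimately show "\<exists>C. nconvex v smulF C \<and> C \<subseteq> f ` A \<and> eventually (\<lambda>x. x \<in> C) G' \<and> C \<subseteq> Y" by blast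
    qed
    have "G' \<le> filtermap f H" unfolding G'_def by (rule filtermap_mono[OF H'(2)])
    also have "filtermap f H \<le> filtermap f (filtercomap f G)" unfolding H_def by (rule filtermap_mono[OF inf_le1])
    also have "\<dots> \<le> G" by (rule filtermap_filtercomap)
    finally have "G' \<le> G" .
    then have GG: "G' = G" using maxG cfG' unfolding max_convex_filter_on_def by blast
    show "cauchy_filter_sn PF G" unfolding cauchy_filter_sn_def
    proof (intro allI impI)
      fix U assume U: "zero_nbhd PF U"
      obtain W where W: "openin (seminorm_topology PF) W" "0 \<in> W" "W \<subseteq> U"
        using U unfolding zero_nbhd_def by (elim exE conjE)
      have "openin (seminorm_topology PE) {x \<in> topspace (seminorm_topology PE). f x \<in> W}"
        by (rule openin_continuous_map_preimage[OF cont W(1)])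
      then have op: "openin (seminorm_topology PE) (f -` W)" by (simp add: topspace_sn vimage_def)
      have "zero_nbhd PE (f -` U)" unfolding zero_nbhd_def
        by (rule exI[of _ "f -` W"]) (use op W f0 in auto)
      then obtain D where D: "eventually (\<lambda>x. x \<in> D) H'" "{x - y | x y. x \<in> D \<and> y \<in> D} \<subseteq> f -` U"
        using cauH' unfolding cauchy_filter_sn_def by blast
      have "eventually (\<lambda>x. x \<in> f ` D) G'" unfolding G'_def eventually_filtermap
        using D(1) by (rule eventually_mono) simp
      moreover have "{x - y | x y. x \<in> f ` D \<and> y \<in> f ` D} \<subseteq> U"
      proof (rule subsetI)
        fix z assume "z \<in> {x - y | x y. x \<in> f ` D \<and> y \<in> f ` D}"
        then obtain a b where ab: "z = f a - f b" "a \<in> D" "b \<in> D" by blast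
        then have "a - b \<in> f -` U" using D(2) by blast
        then show "z \<in> U" using ab(1) fdiff by simp
      qed
      ultimately show "\<exists>X. eventually (\<lambda>x. x \<in> X) G \<and> {x - y | x y. x \<in> X \<and> y \<in> X} \<subseteq> U"
        using GG by blast
    qed
  qed
qed


theorem mainTheorem1:
  fixes v :: "'k::field \<Rightarrow> real"
    and smulE :: "'k \<Rightarrow> 'e::ab_group_add \<Rightarrow> 'e" and PE :: "('e \<Rightarrow> real) set"
    and smulF :: "'k \<Rightarrow> 'f::ab_group_add \<Rightarrow> 'f" and PF :: "('f \<Rightarrow> real) set"
    and A :: "'e set"
  assumes "complete_nonarch_field v"
    and "lcs v smulE PE" and "lcs v smulF PF"
    and "c_precompact v smulE PE A"
  shows "(\<forall>f. Vector_Spaces.linear smulE smulF f \<and>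
              continuous_map (seminorm_topology PE) (seminorm_topology PF) f \<longrightarrow>
              c_precompact v smulF PF (f ` A))
       \<and> c_precompact v smulE PE ((seminorm_topology PE) closure_of A)"
proof -
  have va: "nonarch_abs v" using assms(1) unfolding complete_nonarch_field_def by blast
  have LE: "LC v smulE PE" using assms(2) va unfolding lcs_def by (intro LC.intro) auto
  have LF: "LC v smulF PF" using assms(3) va unfolding lcs_def by (intro LC.intro) auto
  have 1: "\<forall>f. Vector_Spaces.linear smulE smulF f \<and>
              continuous_map (seminorm_topology PE) (seminorm_topology PF) f \<longrightarrow>
              c_precompact v smulF PF (f ` A)"
  proof (intro allI impI)
    fix f assume f: "Vector_Spaces.linear smulE smulF f \<and>
              continuous_map (seminorm_topology PE) (seminorm_topology PF) f"
    show "c_precompact v smulF PF (f ` A)"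
      by (rule image_cpre[OF LE LF conjunct1[OF f] conjunct2[OF f] assms(4)])
  qed
  have 2: "c_precompact v smulE PE ((seminorm_topology PE) closure_of A)"
    by (rule LC.closure_cpre[OF LE assms(4)])
  show ?thesis using 1 2 by (rule conjI)
qed

end
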